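(* Let $G=(V,E)$ be a finite graph with vertices $V=\{v_1,\dots,v_n\}$ (loops and parallel edges allowed), and fix an orientation $\mathcal{O}$ of $G$. Then the number of distinct score vectors of orientations of $G$ equals the number of distinct score vectors of spanning subdigraphs of $G_{\mathcal{O}}$.
   Context: An orientation $\mathcal{O}$ of $G$ assigns to each edge with endpoints $v,w$ one of the ordered pairs $(v,w)$ or $(w,v)$ (a loop at $v$ gets $(v,v)$), giving the directed graph $G_{\mathcal{O}}$ on $V$. A spanning subdigraph of $G_{\mathcal{O}}$ is $(V,\{\mathcal{O}(e):e\in F\})$ for some $F\subseteq E$. For a directed graph $D$ on $V$, the score vector is $s_D=(s_D(v_1),\dots,s_D(v_n))$ with $s_D(v_i)=\deg^+_D(v_i)-\deg^-_D(v_i)$, where $\deg^+_D(v_i)$ (resp. $\deg^-_D(v_i)$) is the number of arcs with tail (resp. head) $v_i$. *)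

theory Defs
  imports Main
begin

text \<open>A finite multigraph (loops and parallel edges allowed): vertex set V, edge set E
  (edge identifiers), and for each edge its set of endpoints (one endpoint for a loop,
  two for an ordinary edge).\<close>
definition multigraph :: "'v set \<Rightarrow> 'e set \<Rightarrow> ('e \<Rightarrow> 'v set) \<Rightarrow> bool" where
  "multigraph V E ends \<longleftrightarrow> finite V \<and> finite E \<and>
     (\<forall>e\<in>E. ends e \<subseteq> V \<and> ends e \<noteq> {} \<and> card (ends e) \<le> 2)"

definition is_orientation :: "'e set \<Rightarrow> ('e \<Rightarrow> 'v set) \<Rightarrow> ('e \<Rightarrow> 'v \<times> 'v) \<Rightarrow> bool" where
  "is_orientation E ends Or \<longleftrightarrow> (\<forall>e\<in>E. {fst (Or e), snd (Or e)} = ends e)"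

text \<open>Score vector of the directed graph with arc set {Or e | e in F}:
  out-degree minus in-degree at each vertex.\<close>
definition score :: "('e \<Rightarrow> 'v \<times> 'v) \<Rightarrow> 'e set \<Rightarrow> 'v \<Rightarrow> int" where
  "score Or F v = int (card {e\<in>F. fst (Or e) = v}) - int (card {e\<in>F. snd (Or e) = v})"

end

theory Submission
  imports Defs
begin

definition cterm :: "('e \<Rightarrow> 'v \<times> 'v) \<Rightarrow> 'e \<Rightarrow> 'v \<Rightarrow> int" where
  "cterm Or e v = (if fst (Or e) = v then 1 else 0) - (if snd (Or e) = v then 1 else 0)"

lemma card_filter_sum: "finite A \<Longrightarrow> int (card {x\<in>A. P x}) = (\<Sum>x\<in>A. if P x then 1 else 0)"
proof -
  assume "finite A"
  then have "(\<Sum>x\<in>{x\<in>A. P x}. (1::int)) = (\<Sum>x\<in>A. if P x then 1 else 0)"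
    by (rule sum.inter_filter)
  then show ?thesis by simp
qed

lemma score_sum: "finite F \<Longrightarrow> score Or F v = (\<Sum>e\<in>F. cterm Or e v)"
  by (simp add: score_def cterm_def card_filter_sum sum_subtractf)

lemma score_cong: "(\<And>e. e \<in> F \<Longrightarrow> Or e = Or' e) \<Longrightarrow> score Or F = score Or' F"
proof
  fix v assume h: "\<And>e. e \<in> F \<Longrightarrow> Or e = Or' e"
  have "{e\<in>F. fst (Or e) = v} = {e\<in>F. fst (Or' e) = v}" using h by auto
  moreover have "{e\<in>F. snd (Or e) = v} = {e\<in>F. snd (Or' e) = v}" using h by auto
  ultimately show "score Or F v = score Or' F v" by (simp add: score_def)
qed

lemma score_swap:
  assumes fin: "finite E" and FE: "F \<subseteq> E"
  shows "score (\<lambda>e. if e \<in> F then prod.swap (O0 e) else O0 e) E v = score O0 E v - 2 * score O0 F v"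
proof -
  let ?Or = "\<lambda>e. if e \<in> F then prod.swap (O0 e) else O0 e"
  have finF: "finite F" using fin FE finite_subset by blast
  have E: "E = F \<union> (E - F)" using FE by blast
  have "score ?Or E v = (\<Sum>e\<in>F. cterm ?Or e v) + (\<Sum>e\<in>E-F. cterm ?Or e v)"
    using fin finF by (simp add: score_sum sum.subset_diff[OF FE fin])
  also have "(\<Sum>e\<in>F. cterm ?Or e v) = - (\<Sum>e\<in>F. cterm O0 e v)"
    by (simp add: cterm_def sum_negf[symmetric] prod.swap_def)
  also have "(\<Sum>e\<in>E-F. cterm ?Or e v) = (\<Sum>e\<in>E-F. cterm O0 e v)"
    by (rule sum.cong) (auto simp: cterm_def)
  also have "score O0 E v = (\<Sum>e\<in>F. cterm O0 e v) + (\<Sum>e\<in>E-F. cterm O0 e v)"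
    using fin finF by (simp add: score_sum sum.subset_diff[OF FE fin])
  ultimately show ?thesis using finF by (simp add: score_sum)
qed

lemma pair_set_eq: "{a, b} = {c, d} \<Longrightarrow> (a, b) = (c, d) \<or> (a, b) = (d, c)"
  by (metis doubleton_eq_iff)

theorem lemma2p14:
  fixes V :: "'v set" and E :: "'e set" and ends :: "'e \<Rightarrow> 'v set"
    and O0 :: "'e \<Rightarrow> 'v \<times> 'v"
  assumes "multigraph V E ends"
    and "is_orientation E ends O0"
  shows "card {score Or E | Or. is_orientation E ends Or} = card {score O0 F | F. F \<subseteq> E}"
proof -
  have fin: "finite E" using assms(1) by (simp add: multigraph_def)
  define h where "h = (\<lambda>s::'v \<Rightarrow> int. \<lambda>v. score O0 E v - 2 * s v)"
  have inj: "inj_on h X" for X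
    by (rule inj_onI) (auto simp: h_def fun_eq_iff)
  have eq: "{score Or E | Or. is_orientation E ends Or} = h ` {score O0 F | F. F \<subseteq> E}"
  proof (rule set_eqI, rule iffI)
    fix s assume "s \<in> {score Or E | Or. is_orientation E ends Or}"
    then obtain Or where s: "s = score Or E" and o: "is_orientation E ends Or" by blast
    define F where "F = {e\<in>E. Or e \<noteq> O0 e}"
    have FE: "F \<subseteq> E" by (auto simp: F_def)
    have "\<And>e. e \<in> E \<Longrightarrow> Or e = (if e \<in> F then prod.swap (O0 e) else O0 e)"
    proof -
      fix e assume e: "e \<in> E"
      have "{fst (Or e), snd (Or e)} = {fst (O0 e), snd (O0 e)}"
        using o assms(2) e by (simp add: is_orientation_def)
      then have "(fst (Or e), snd (Or e)) = (fst (O0 e), snd (O0 e)) \<or>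
                 (fst (Or e), snd (Or e)) = (snd (O0 e), fst (O0 e))" by (rule pair_set_eq)
      then have d: "Or e = O0 e \<or> Or e = prod.swap (O0 e)"
        by (simp add: prod_eq_iff)
      show "Or e = (if e \<in> F then prod.swap (O0 e) else O0 e)"
      proof (cases "e \<in> F")
        case True
        then have "Or e \<noteq> O0 e" by (simp add: F_def)
        then show ?thesis using d True by simp
      next
        case False
        then show ?thesis using e by (simp add: F_def)
      qed
    qed
    then have "score Or E = score (\<lambda>e. if e \<in> F then prod.swap (O0 e) else O0 e) E"
      by (rule score_cong)
    then have "s = score (\<lambda>e. if e \<in> F then prod.swap (O0 e) else O0 e) E"
      using s by simp
    then have "s = h (score O0 F)" by (simp add: h_def fun_eq_iff score_swap[OF fin FE])
    then show "s \<in> h ` {score O0 F | F. F \<subseteq> E}" using FE by blast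
  next
    fix s assume "s \<in> h ` {score O0 F | F. F \<subseteq> E}"
    then obtain F where s: "s = h (score O0 F)" and FE: "F \<subseteq> E" by blast
    let ?Or = "\<lambda>e. if e \<in> F then prod.swap (O0 e) else O0 e"
    have o: "is_orientation E ends ?Or"
      using assms(2) by (auto simp: is_orientation_def prod.swap_def insert_commute)
    have "s = score ?Or E" using s by (simp add: h_def fun_eq_iff score_swap[OF fin FE])
    then show "s \<in> {score Or E | Or. is_orientation E ends Or}" using o by blast
  qed
  show ?thesis unfolding eq by (rule card_image[OF inj])
qed

end
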